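(* Let $\gamma>0$, let $\beta_1=\beta_1(\gamma)$ be the unique positive solution of $\frac{\sqrt\pi}{2}\gamma x(1+x)^{1/2}(3+x)=1$, let $0\le\beta<\beta_1$ and let $\mathrm{Ste}_\infty>0$. For each $\lambda>0$ let $\varphi_\lambda$ be the unique solution, within the set of bounded analytic functions $h:[0,\lambda]\to\mathbb{R}$ with $0\le h\le 1$, of \begin{align*} &[(1+\beta y(\eta))y'(\eta)]'+2\eta y'(\eta)=0, \quad 0<\eta<\lambda,\\ &y'(0)+\beta y(0)y'(0)-\gamma y(0)=0,\\ &y(\lambda)=1. \end{align*} Then the equation $$\frac{\varphi_\lambda'(\lambda)}{\lambda}=\frac{2}{(1+\beta)\,\mathrm{Ste}_\infty}$$ has at least one solution $\lambda>0$.
   Context: In the physical problem, $\mathrm{Ste}_\infty=c(T_f-T_\infty)/l$ is the Stefan number and $\gamma=2h_0\sqrt{\alpha_0}/k_0$. *)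

theory Defs
  imports "HOL-Analysis.Analysis"
begin

definition beta1 :: "real \<Rightarrow> real" where
  "beta1 \<gamma> = (THE x. x > 0 \<and> sqrt pi / 2 * \<gamma> * x * sqrt (1 + x) * (3 + x) = 1)"

definition real_analytic_on :: "(real \<Rightarrow> real) \<Rightarrow> real set \<Rightarrow> bool" where
  "real_analytic_on f S \<longleftrightarrow>
     (\<forall>x\<in>S. \<exists>r>0. \<exists>a::nat \<Rightarrow> real.
        \<forall>y\<in>S. \<bar>y - x\<bar> < r \<longrightarrow> (\<lambda>n. a n * (y - x) ^ n) sums f y)"

definition solves_problem :: "real \<Rightarrow> real \<Rightarrow> real \<Rightarrow> (real \<Rightarrow> real) \<Rightarrow> bool" where
  "solves_problem \<beta> \<gamma> lam h \<longleftrightarrow>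
     real_analytic_on h {0..lam} \<and>
     (\<forall>\<eta>\<in>{0..lam}. 0 \<le> h \<eta> \<and> h \<eta> \<le> 1) \<and>
     (\<exists>h'. (\<forall>\<eta>\<in>{0..lam}. (h has_real_derivative h' \<eta>) (at \<eta> within {0..lam})) \<and>
           (\<forall>\<eta>\<in>{0<..<lam}.
              ((\<lambda>t. (1 + \<beta> * h t) * h' t) has_real_derivative (- 2 * \<eta> * h' \<eta>)) (at \<eta>)) \<and>
           h' 0 + \<beta> * h 0 * h' 0 - \<gamma> * h 0 = 0) \<and>
     h lam = 1"

end

theory Submission
  imports Defs
begin


lemma int00: "integral {0..0::real} f = (0::real)"
  by simp

lemma deriv_at_int:
  assumes "(f has_real_derivative d) (at x within {a..b})" "a < x" "x < b"
  shows "(f has_real_derivative d) (at x)"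
  using assms by (simp add: at_within_Icc_at)

lemma mvt_upper:
  fixes f :: "real \<Rightarrow> real"
  assumes "a \<le> b" "continuous_on {a..b} f"
    and "\<And>x. a < x \<Longrightarrow> x < b \<Longrightarrow> (f has_real_derivative f' x) (at x)"
    and "\<And>x. a < x \<Longrightarrow> x < b \<Longrightarrow> f' x \<le> M"
  shows "f b - f a \<le> M * (b - a)"
proof (cases "a = b")
  case True then show ?thesis by simp
next
  case False
  then have ab: "a < b" using assms(1) by simp
  obtain l z where z: "a < z" "z < b" "DERIV f z :> l" "f b - f a = (b - a) * l"
    using MVT[OF ab assms(2)] assms(3) real_differentiable_def by blast
  have "l = f' z" using DERIV_unique[OF z(3) assms(3)[OF z(1,2)]] .
  then have "l \<le> M" using assms(4)[OF z(1,2)] by simp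
  then show ?thesis using z(4) ab by (simp add: mult.commute mult_right_mono)
qed

lemma mvt_lower:
  fixes f :: "real \<Rightarrow> real"
  assumes "a \<le> b" "continuous_on {a..b} f"
    and "\<And>x. a < x \<Longrightarrow> x < b \<Longrightarrow> (f has_real_derivative f' x) (at x)"
    and "\<And>x. a < x \<Longrightarrow> x < b \<Longrightarrow> m \<le> f' x"
  shows "m * (b - a) \<le> f b - f a"
proof -
  have "(-f) b - (-f) a \<le> (-m) * (b - a)"
    apply (rule mvt_upper[where f'="\<lambda>x. - f' x"])
    using assms by (auto intro: derivative_intros continuous_intros)
  then show ?thesis by simp
qed

lemma endpoint_deriv:
  fixes f k f' :: "real \<Rightarrow> real"
  assumes ab: "a < b" and cf: "continuous_on {a..b} f"
    and df: "\<And>x. x \<in> {a..b} \<Longrightarrow> (f has_real_derivative f' x) (at x within {a..b})"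
    and fk: "\<And>x. a < x \<Longrightarrow> x < b \<Longrightarrow> f' x = k x"
    and ck: "continuous_on {a..b} k"
  shows "f' a = k a \<and> f' b = k b"
proof -
  define \<Phi> where "\<Phi> x = f a + integral {a..x} k" for x
  have d\<Phi>: "(\<Phi> has_real_derivative k x) (at x within {a..b})" if "x \<in> {a..b}" for x
    unfolding \<Phi>_def using integral_has_real_derivative[OF ck that]
    by (auto intro!: derivative_eq_intros)
  have c\<Phi>: "continuous_on {a..b} \<Phi>" by (rule DERIV_continuous_on[OF d\<Phi>])
  have eq: "f x = \<Phi> x" if x: "x \<in> {a..b}" for x
  proof (cases "x = a")
    case True then show ?thesis by (simp add: \<Phi>_def)
  next
    case False
    then have ax: "a < x" using x by auto
    have "(\<lambda>t. f t - \<Phi> t) x = (\<lambda>t. f t - \<Phi> t) a"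
    proof (rule DERIV_isconst_end[OF ax])
      show "continuous_on {a..x} (\<lambda>t. f t - \<Phi> t)"
        using cf c\<Phi> x by (auto intro!: continuous_intros elim: continuous_on_subset)
      fix t assume t: "a < t" "t < x"
      have "(f has_real_derivative f' t) (at t)" using df[of t] t x deriv_at_int[of f "f' t" t a b] by auto
      moreover have "(\<Phi> has_real_derivative k t) (at t)" using d\<Phi>[of t] t x deriv_at_int[of \<Phi> "k t" t a b] by auto
      ultimately show "((\<lambda>t. f t - \<Phi> t) has_real_derivative 0) (at t)"
        using fk[of t] t x by (auto intro!: derivative_eq_intros)
    qed
    then show ?thesis by (simp add: \<Phi>_def)
  qed
  have uq: "f' y = k y" if y: "y \<in> {a..b}" for y
  proof -
    have "(f has_real_derivative k y) (at y within {a..b})"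
      apply (rule has_field_derivative_transform_within[OF d\<Phi>[OF y], of 1])
      using y eq by auto
    then show ?thesis using df[OF y] vector_derivative_unique_within_closed_interval[of a b y f "f' y" "k y"] ab y
      by (auto simp: has_real_derivative_iff_has_vector_derivative)
  qed
  show ?thesis using uq ab by auto
qed



definition Pint :: "real \<Rightarrow> (real \<Rightarrow> real) \<Rightarrow> real \<Rightarrow> real" where
  "Pint \<beta> h \<eta> = integral {0..\<eta>} (\<lambda>s. 2 * s / (1 + \<beta> * h s))"

definition good :: "real \<Rightarrow> real \<Rightarrow> real \<Rightarrow> (real \<Rightarrow> real) \<Rightarrow> bool" where
  "good \<beta> \<gamma> L h \<longleftrightarrow> continuous_on {0..L} h \<and> (\<forall>\<eta>\<in>{0..L}. 0 \<le> h \<eta> \<and> h \<eta> \<le> 1) \<and>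
     (\<forall>\<eta>\<in>{0..L}. (h has_real_derivative (\<gamma>*h 0*exp(-Pint \<beta> h \<eta>)/(1+\<beta>*h \<eta>))) (at \<eta> within {0..L}))"

lemma const_open:
  fixes g :: "real \<Rightarrow> real"
  assumes d: "\<And>x. a < x \<Longrightarrow> x < b \<Longrightarrow> (g has_real_derivative 0) (at x)"
    and "a < x" "x < b" "a < y" "y < b"
  shows "g x = g y"
proof -
  have *: "g v = g u" if uv: "a < u" "u < v" "v < b" for u v
  proof (rule DERIV_isconst_end[OF \<open>u < v\<close>])
    show "continuous_on {u..v} g"
    proof (rule DERIV_continuous_on[where D="\<lambda>_. 0"])
      fix x assume "x \<in> {u..v}"
      then have "a < x" "x < b" using uv by auto
      then show "(g has_real_derivative 0) (at x within {u..v})"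
        by (rule has_field_derivative_at_within[OF d])
    qed
    fix t assume "u < t" "t < v"
    then show "DERIV g t :> 0" using uv by (intro d) auto
  qed
  show ?thesis
  proof (cases "x < y")
    case True then show ?thesis using *[of x y] assms by simp
  next
    case False
    then have "y < x \<or> y = x" by auto
    then show ?thesis using *[of y x] assms by auto
  qed
qed

lemma P_deriv:
  assumes "continuous_on {0..L} h" "\<beta> \<ge> 0" "\<forall>\<eta>\<in>{0..L}. 0 \<le> h \<eta>" "t \<in> {0..L}"
  shows "continuous_on {0..L} (\<lambda>s. 2 * s / (1 + \<beta> * h s))"
    and "((\<lambda>x. Pint \<beta> h x) has_real_derivative 2 * t / (1 + \<beta> * h t)) (at t within {0..L})"
proof -
  show cq: "continuous_on {0..L} (\<lambda>s. 2 * s / (1 + \<beta> * h s))"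
    using assms by (intro continuous_intros) (auto simp: add_nonneg_eq_0_iff)
  show "((\<lambda>x. Pint \<beta> h x) has_real_derivative 2 * t / (1 + \<beta> * h t)) (at t within {0..L})"
    unfolding Pint_def using integral_has_real_derivative[OF cq assms(4)] by simp
qed

lemma key:
  assumes b: "\<beta> \<ge> 0" and L: "L > 0" and sp: "solves_problem \<beta> \<gamma> L h"
  shows "good \<beta> \<gamma> L h"
proof -
  note sp' = sp[unfolded solves_problem_def]
  have bnd: "\<forall>\<eta>\<in>{0..L}. 0 \<le> h \<eta> \<and> h \<eta> \<le> 1" by (rule conjunct1[OF conjunct2[OF sp']])
  note ex = conjunct1[OF conjunct2[OF conjunct2[OF sp']]]
  obtain h' where H: "(\<forall>\<eta>\<in>{0..L}. (h has_real_derivative h' \<eta>) (at \<eta> within {0..L})) \<and>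
           (\<forall>\<eta>\<in>{0<..<L}.
              ((\<lambda>t. (1 + \<beta> * h t) * h' t) has_real_derivative (- 2 * \<eta> * h' \<eta>)) (at \<eta>)) \<and>
           h' 0 + \<beta> * h 0 * h' 0 - \<gamma> * h 0 = 0" using ex by (rule exE)
  have d1: "\<And>\<eta>. \<eta>\<in>{0..L} \<Longrightarrow> (h has_real_derivative h' \<eta>) (at \<eta> within {0..L})"
    by (rule bspec[OF conjunct1[OF H]])
  have d2: "\<And>\<eta>. \<eta>\<in>{0<..<L} \<Longrightarrow> ((\<lambda>t. (1 + \<beta> * h t) * h' t) has_real_derivative (- 2 * \<eta> * h' \<eta>)) (at \<eta>)"
    by (rule bspec[OF conjunct1[OF conjunct2[OF H]]])
  have rb: "h' 0 + \<beta> * h 0 * h' 0 - \<gamma> * h 0 = 0" using conjunct2[OF conjunct2[OF H]] .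
  have ch: "continuous_on {0..L} h" by (rule DERIV_continuous_on[OF d1])
  have pos: "1 + \<beta> * h t > 0" if "t \<in> {0..L}" for t
  proof -
    have "\<beta> * h t \<ge> 0" using bnd that b by simp
    then show ?thesis by linarith
  qed
  define P where "P = Pint \<beta> h"
  have dP: "(P has_real_derivative 2 * t / (1 + \<beta> * h t)) (at t within {0..L})" if "t \<in> {0..L}" for t
    using P_deriv(2)[OF ch b _ that] bnd unfolding P_def by auto
  have cP: "continuous_on {0..L} P" by (rule DERIV_continuous_on[OF dP])
  define w where "w t = (1 + \<beta> * h t) * h' t" for t
  define g where "g t = w t * exp (P t)" for t
  have dg: "(g has_real_derivative 0) (at t)" if t: "0 < t" "t < L" for t
  proof -
    have p: "1 + \<beta> * h t > 0" using pos t by auto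
    have dPt: "(P has_real_derivative 2 * t / (1 + \<beta> * h t)) (at t)"
      using dP[of t] t deriv_at_int[of P _ t 0 L] by auto
    have d2t: "(w has_real_derivative (- 2 * t * h' t)) (at t)"
      using d2[of t] t unfolding w_def by auto
    have e: "((\<lambda>t. exp (P t)) has_real_derivative exp (P t) * (2 * t / (1 + \<beta> * h t))) (at t)"
      by (rule DERIV_chain2[OF DERIV_exp dPt])
    have "(g has_real_derivative (- 2 * t * h' t) * exp (P t) + exp (P t) * (2 * t / (1 + \<beta> * h t)) * w t) (at t)"
      unfolding g_def by (rule DERIV_mult[OF d2t e])
    moreover have "(- 2 * t * h' t) * exp (P t) + exp (P t) * (2 * t / (1 + \<beta> * h t)) * w t = 0"
      using p unfolding w_def by (simp add: field_simps)
    ultimately show ?thesis by simp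
  qed
  define K where "K = g (L/2)"
  define k where "k t = K * exp (- P t) / (1 + \<beta> * h t)" for t
  have hk: "h' t = k t" if t: "0 < t" "t < L" for t
  proof -
    have "g t = K" unfolding K_def by (rule const_open[OF dg]) (use t L in auto)
    then have eq2: "K = h' t * (exp (P t) * (1 + \<beta> * h t))" unfolding g_def w_def by (simp add: algebra_simps)
    have nz: "1 + \<beta> * h t \<noteq> 0" using pos[of t] t by auto
    have ee: "exp (- P t) * exp (P t) = 1" by (simp add: exp_minus)
    have "K * exp (- P t) = h' t * (1 + \<beta> * h t) * (exp (P t) * exp (- P t))"
      unfolding eq2 by (simp only: mult_ac)
    then have "K * exp (- P t) = h' t * (1 + \<beta> * h t)" using ee by (simp add: mult.commute)
    then show ?thesis unfolding k_def using nz by simp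
  qed
  have ck: "continuous_on {0..L} k"
    unfolding k_def using cP ch pos by (intro continuous_intros) (auto simp: less_imp_neq[symmetric])
  have ep: "h' 0 = k 0 \<and> h' L = k L"
    by (rule endpoint_deriv[OF L ch d1 hk ck]) auto
  have P0: "P 0 = 0" unfolding P_def Pint_def by simp
  have "h' 0 = K / (1 + \<beta> * h 0)" using ep P0 unfolding k_def by simp
  then have "K = h' 0 * (1 + \<beta> * h 0)" using pos[of 0] L by (simp add: field_simps)
  then have K: "K = \<gamma> * h 0" using rb by (simp add: algebra_simps)
  have "h' \<eta> = \<gamma> * h 0 * exp (- P \<eta>) / (1 + \<beta> * h \<eta>)" if "\<eta> \<in> {0..L}" for \<eta>
    using that ep hk[of \<eta>] K unfolding k_def by (cases "\<eta> = 0"; cases "\<eta> = L") auto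
  then show ?thesis unfolding good_def using ch bnd d1 unfolding P_def by auto
qed



lemma good_cont: "good \<beta> \<gamma> L h \<Longrightarrow> continuous_on {0..L} h" unfolding good_def by (erule conjunct1)
lemma good_bnd: assumes "good \<beta> \<gamma> L h" "\<eta> \<in> {0..L}" shows "0 \<le> h \<eta> \<and> h \<eta> \<le> 1"
  using bspec[OF conjunct1[OF conjunct2[OF assms(1)[unfolded good_def]]] assms(2)] .
lemma good_der: assumes "good \<beta> \<gamma> L h" "\<eta> \<in> {0..L}" shows
   "(h has_real_derivative (\<gamma>*h 0*exp(-Pint \<beta> h \<eta>)/(1+\<beta>*h \<eta>))) (at \<eta> within {0..L})"
  using bspec[OF conjunct2[OF conjunct2[OF assms(1)[unfolded good_def]]] assms(2)] .

lemma good_restrict: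
  assumes "good \<beta> \<gamma> L h" "L' \<le> L"
  shows "good \<beta> \<gamma> L' h"
proof -
  have sub: "{0..L'} \<subseteq> {0..L}" using assms(2) by auto
  show ?thesis unfolding good_def
  proof (intro conjI ballI)
    show "continuous_on {0..L'} h" using good_cont[OF assms(1)] sub by (rule continuous_on_subset)
    fix \<eta> assume "\<eta> \<in> {0..L'}"
    then have e: "\<eta> \<in> {0..L}" using sub by blast
    show "0 \<le> h \<eta>" "h \<eta> \<le> 1" using good_bnd[OF assms(1) e] by auto
    show "(h has_real_derivative (\<gamma>*h 0*exp(-Pint \<beta> h \<eta>)/(1+\<beta>*h \<eta>))) (at \<eta> within {0..L'})"
      by (rule has_field_derivative_subset[OF good_der[OF assms(1) e] sub])
  qed
qed

lemma q_cont:
  assumes "good \<beta> \<gamma> L h" "\<beta> \<ge> 0" "x \<le> L"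
  shows "continuous_on {0..x} (\<lambda>s. 2 * s / (1 + \<beta> * h s))"
proof -
  have ch: "continuous_on {0..x} h" using good_cont[OF assms(1)] by (rule continuous_on_subset) (use assms(3) in auto)
  have "1 + \<beta> * h s \<noteq> 0" if "s \<in> {0..x}" for s
  proof -
    have "0 \<le> h s" using good_bnd[OF assms(1), of s] that assms(3) by auto
    then have "0 \<le> \<beta> * h s" using assms(2) by simp
    then show ?thesis by linarith
  qed
  then show ?thesis by (intro continuous_intros ch) auto
qed

lemma div_le_self_real:
  fixes a d :: real
  assumes "0 \<le> a" "1 \<le> d" shows "a / d \<le> a"
proof -
  have "a \<le> a * d" using mult_left_mono[OF assms(2) assms(1)] by simp
  then show ?thesis using assms by (subst pos_divide_le_eq) auto
qed

lemma q_bnd: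
  fixes \<beta> s u :: real
  assumes "\<beta> \<ge> 0" "0 \<le> s" "0 \<le> u"
  shows "0 \<le> 2 * s / (1 + \<beta> * u) \<and> 2 * s / (1 + \<beta> * u) \<le> 2 * s"
proof -
  have d: "1 \<le> 1 + \<beta> * u" using assms mult_nonneg_nonneg[of \<beta> u] by linarith
  have "2 * s \<le> 2 * s * (1 + \<beta> * u)" using mult_left_mono[OF d, of "2 * s"] assms by simp
  then have "2 * s / (1 + \<beta> * u) \<le> 2 * s" using d by (subst pos_divide_le_eq) auto
  moreover have "0 \<le> 2 * s / (1 + \<beta> * u)" by (rule divide_nonneg_pos) (use d assms in linarith)+
  ultimately show ?thesis by simp
qed

lemma P_bounds:
  assumes g: "good \<beta> \<gamma> L h" and b: "\<beta> \<ge> 0" and x: "x \<in> {0..L}"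
  shows "0 \<le> Pint \<beta> h x \<and> Pint \<beta> h x \<le> 2 * x * x"
proof -
  have c: "continuous_on {0..x} (\<lambda>s. 2 * s / (1 + \<beta> * h s))" using q_cont[OF g b] x by auto
  have hb: "0 \<le> h s" if "s \<in> {0..x}" for s using good_bnd[OF g, of s] that x by auto
  have "0 \<le> Pint \<beta> h x" unfolding Pint_def
    by (rule integral_nonneg[OF integrable_continuous_interval[OF c]]) (use q_bnd[OF b] hb in auto)
  moreover have "norm (Pint \<beta> h x) \<le> (2 * x) * (x - 0)" unfolding Pint_def
  proof (rule integral_bound)
    fix t assume t: "t \<in> {0..x}"
    have "0 \<le> 2 * t / (1 + \<beta> * h t) \<and> 2 * t / (1 + \<beta> * h t) \<le> 2 * t" using q_bnd[OF b, of t "h t"] hb[OF t] t by auto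
    then have q0: "0 \<le> 2 * t / (1 + \<beta> * h t)" and q1: "2 * t / (1 + \<beta> * h t) \<le> 2 * t" by auto
    have "norm (2 * t / (1 + \<beta> * h t)) = 2 * t / (1 + \<beta> * h t)"
      by (simp only: real_norm_def abs_of_nonneg[OF q0])
    then show "norm (2 * t / (1 + \<beta> * h t)) \<le> 2 * x" using q1 t by auto
  qed (use x c in auto)
  ultimately show ?thesis by simp
qed

lemma dv_bounds:
  assumes g: "good \<beta> \<gamma> L h" and b: "\<beta> \<ge> 0" "\<gamma> > 0" and x: "x \<in> {0..L}"
  shows "0 \<le> \<gamma>*h 0*exp(-Pint \<beta> h x)/(1+\<beta>*h x) \<and> \<gamma>*h 0*exp(-Pint \<beta> h x)/(1+\<beta>*h x) \<le> \<gamma> * h 0"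
proof -
  have h0: "0 \<le> h 0" using good_bnd[OF g, of 0] x by auto
  have hx: "0 \<le> h x" using good_bnd[OF g x] by auto
  have "0 \<le> Pint \<beta> h x" using P_bounds[OF g b(1) x] by auto
  then have e: "exp(-Pint \<beta> h x) \<le> 1" "0 < exp(-Pint \<beta> h x)" by auto
  have d: "1 \<le> 1 + \<beta> * h x" using b hx by simp
  have "\<gamma>*h 0*exp(-Pint \<beta> h x) \<le> \<gamma> * h 0" by (rule mult_left_le[OF e(1)]) (use h0 b in simp)
  moreover have "\<gamma>*h 0*exp(-Pint \<beta> h x)/(1+\<beta>*h x) \<le> \<gamma>*h 0*exp(-Pint \<beta> h x)"
    by (rule div_le_self_real) (use d e h0 b in simp_all)
  moreover have "0 \<le> \<gamma>*h 0*exp(-Pint \<beta> h x)/(1+\<beta>*h x)"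
  proof -
    have "0 \<le> \<gamma>*h 0*exp(-Pint \<beta> h x)" using h0 b by simp
    then show ?thesis by (rule divide_nonneg_pos) (use d in auto)
  qed
  ultimately show ?thesis by linarith
qed

lemma good_mono:
  assumes g: "good \<beta> \<gamma> L h" and b: "\<beta> \<ge> 0" "\<gamma> > 0" and xy: "0 \<le> x" "x \<le> y" "y \<le> L"
  shows "h x \<le> h y \<and> h y - h x \<le> \<gamma> * h 0 * (y - x)"
proof -
  have c: "continuous_on {x..y} h" using good_cont[OF g] by (rule continuous_on_subset) (use xy in auto)
  have d: "(h has_real_derivative (\<gamma>*h 0*exp(-Pint \<beta> h t)/(1+\<beta>*h t))) (at t)" if "x < t" "t < y" for t
    using good_der[OF g, of t] that xy deriv_at_int[of h _ t 0 L] by auto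
  have "0 * (y - x) \<le> h y - h x"
    by (rule mvt_lower[OF xy(2) c d]) (use dv_bounds[OF g b] xy in auto)
  moreover have "h y - h x \<le> (\<gamma> * h 0) * (y - x)"
    by (rule mvt_upper[OF xy(2) c d]) (use dv_bounds[OF g b] xy in auto)
  ultimately show ?thesis by simp
qed



lemma energy_ineq:
  fixes D R dD dR g c :: real
  assumes a1: "\<bar>dD\<bar> \<le> g * \<bar>R\<bar>" and a2: "\<bar>dR\<bar> \<le> c * \<bar>D\<bar>" and g: "0 \<le> g" and c: "0 \<le> c"
  shows "2*D*dD + 2*R*dR \<le> (g + c) * (D^2 + R^2)"
proof -
  have 1: "D*dD \<le> \<bar>D\<bar>*(g*\<bar>R\<bar>)"
  proof -
    have "D*dD \<le> \<bar>D\<bar>*\<bar>dD\<bar>" by (metis abs_ge_self abs_mult)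
    also have "\<dots> \<le> \<bar>D\<bar>*(g*\<bar>R\<bar>)" by (rule mult_left_mono[OF a1]) simp
    finally show ?thesis .
  qed
  have 2: "R*dR \<le> \<bar>R\<bar>*(c*\<bar>D\<bar>)"
  proof -
    have "R*dR \<le> \<bar>R\<bar>*\<bar>dR\<bar>" by (metis abs_ge_self abs_mult)
    also have "\<dots> \<le> \<bar>R\<bar>*(c*\<bar>D\<bar>)" by (rule mult_left_mono[OF a2]) simp
    finally show ?thesis .
  qed
  have 3: "2*\<bar>D\<bar>*\<bar>R\<bar> \<le> D^2+R^2"
  proof -
    have "0 \<le> (\<bar>D\<bar> - \<bar>R\<bar>)^2" by simp
    then show ?thesis by (simp add: power2_diff power2_abs)
  qed
  have 4: "(g+c)*(2*\<bar>D\<bar>*\<bar>R\<bar>) \<le> (g+c)*(D^2+R^2)" by (rule mult_left_mono[OF 3]) (use g c in simp)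
  have 5: "2*(\<bar>D\<bar>*(g*\<bar>R\<bar>)) + 2*(\<bar>R\<bar>*(c*\<bar>D\<bar>)) = (g+c)*(2*\<bar>D\<bar>*\<bar>R\<bar>)" by (simp add: algebra_simps)
  show ?thesis using 1 2 4 5 by linarith
qed

lemma exp_lip1:
  fixes p q :: real
  assumes "0 \<le> p" "p \<le> q"
  shows "exp (-p) - exp(-q) \<le> q - p"
proof -
  have e1: "exp (-q) = exp(-p) * exp(-(q-p))" by (simp add: exp_add[symmetric])
  have e2: "0 \<le> 1 - exp(-(q-p))" using assms by simp
  have "1 + (-(q-p)) \<le> exp (-(q-p))" by (rule exp_ge_add_one_self)
  then have e3: "1 - exp(-(q-p)) \<le> q - p" by linarith
  have e4: "exp(-p) \<le> 1" using assms by simp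
  have "exp (-p) - exp(-q) = exp(-p) * (1 - exp(-(q-p)))" using e1 by (simp add: algebra_simps)
  also have "\<dots> \<le> 1 * (1 - exp(-(q-p)))" by (rule mult_right_mono[OF e4 e2])
  finally show ?thesis using e3 by simp
qed

lemma exp_lip:
  fixes p q :: real
  assumes "0 \<le> p" "0 \<le> q"
  shows "\<bar>exp (-p) - exp(-q)\<bar> \<le> \<bar>p - q\<bar>"
proof (cases "p \<le> q")
  case True
  then show ?thesis using exp_lip1[OF assms(1) True] by simp
next
  case False
  then show ?thesis using exp_lip1[OF assms(2), of p] by simp
qed

lemma q_diff:
  fixes s u v \<beta> :: real
  assumes "0 \<le> s" "0 \<le> u" "0 \<le> v" "0 \<le> \<beta>"
  shows "\<bar>2 * s / (1 + \<beta> * u) - 2 * s / (1 + \<beta> * v)\<bar> \<le> 2 * s * \<beta> * \<bar>u - v\<bar>"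
proof -
  have du: "1 \<le> 1 + \<beta> * u" using assms mult_nonneg_nonneg[of \<beta> u] by linarith
  have dv: "1 \<le> 1 + \<beta> * v" using assms mult_nonneg_nonneg[of \<beta> v] by linarith
  have dd: "1 \<le> (1 + \<beta> * u) * (1 + \<beta> * v)" using du dv mult_mono[OF du dv] by simp
  have "2 * s / (1 + \<beta> * u) - 2 * s / (1 + \<beta> * v) = 2 * s * \<beta> * (v - u) / ((1 + \<beta> * u) * (1 + \<beta> * v))"
    using du dv by (simp add: field_simps)
  then have "\<bar>2 * s / (1 + \<beta> * u) - 2 * s / (1 + \<beta> * v)\<bar> = \<bar>2 * s * \<beta> * (v - u)\<bar> / ((1 + \<beta> * u) * (1 + \<beta> * v))"
    using dd by simp
  also have "\<dots> \<le> \<bar>2 * s * \<beta> * (v - u)\<bar>" by (rule div_le_self_real) (use dd in simp_all)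
  also have "\<dots> = 2 * s * \<beta> * \<bar>u - v\<bar>" using assms by (simp add: abs_mult abs_minus_commute)
  finally show ?thesis .
qed

definition Uf :: "real \<Rightarrow> real \<Rightarrow> real" where "Uf \<beta> v = v + \<beta> / 2 * v ^ 2"

lemma Uf_diff:
  fixes \<beta> u v :: real
  shows "Uf \<beta> v - Uf \<beta> u = (v - u) * (1 + \<beta> * (u + v) / 2)"
  unfolding Uf_def by (simp add: field_simps power2_eq_square)

lemma Uf_facts:
  fixes \<beta> u v :: real
  assumes b: "0 \<le> \<beta>" and u: "0 \<le> u" and v: "0 \<le> v"
  shows "\<bar>v - u\<bar> \<le> \<bar>Uf \<beta> v - Uf \<beta> u\<bar>"
    and "u \<le> v \<Longrightarrow> v - u \<le> Uf \<beta> v - Uf \<beta> u"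
    and "u < v \<Longrightarrow> 0 < Uf \<beta> v - Uf \<beta> u"
    and "u \<le> v \<Longrightarrow> u \<le> 1 \<Longrightarrow> v \<le> 1 \<Longrightarrow> Uf \<beta> v - Uf \<beta> u \<le> (1 + \<beta>) * (v - u)"
proof -
  have f: "1 \<le> 1 + \<beta> * (u + v) / 2" using b u v by simp
  show "\<bar>v - u\<bar> \<le> \<bar>Uf \<beta> v - Uf \<beta> u\<bar>" unfolding Uf_diff abs_mult
    using mult_left_mono[OF f, of "\<bar>v - u\<bar>"] f by simp
  show "u \<le> v \<Longrightarrow> v - u \<le> Uf \<beta> v - Uf \<beta> u" unfolding Uf_diff
    using mult_left_mono[OF f, of "v - u"] by simp
  show "u < v \<Longrightarrow> 0 < Uf \<beta> v - Uf \<beta> u" unfolding Uf_diff using f by simp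
  assume uv: "u \<le> v" "u \<le> 1" "v \<le> 1"
  have "1 + \<beta> * (u + v) / 2 \<le> 1 + \<beta>"
  proof -
    have "\<beta> * (u + v) \<le> \<beta> * 2" using uv b by (intro mult_left_mono) auto
    then show ?thesis by simp
  qed
  then have "(v - u) * (1 + \<beta> * (u + v) / 2) \<le> (v - u) * (1 + \<beta>)"
    by (rule mult_left_mono) (use uv in simp)
  then show "Uf \<beta> v - Uf \<beta> u \<le> (1 + \<beta>) * (v - u)" unfolding Uf_diff by (simp add: mult.commute)
qed

lemma dU:
  assumes g: "good \<beta> \<gamma> L h" and b: "0 \<le> \<beta>" and x: "x \<in> {0..L}"
  shows "((\<lambda>t. Uf \<beta> (h t)) has_real_derivative \<gamma> * h 0 * exp (- Pint \<beta> h x)) (at x within {0..L})"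
proof -
  define dv where "dv = \<gamma>*h 0*exp(-Pint \<beta> h x)/(1+\<beta>*h x)"
  have d: "(h has_real_derivative dv) (at x within {0..L})" unfolding dv_def by (rule good_der[OF g x])
  have "0 \<le> \<beta> * h x" using good_bnd[OF g x] b by simp
  then have nz: "1 + \<beta> * h x \<noteq> 0" by linarith
  have "((\<lambda>t. h t + \<beta> / 2 * (h t * h t)) has_real_derivative dv + \<beta> / 2 * (dv * h x + dv * h x)) (at x within {0..L})"
    by (intro DERIV_add DERIV_cmult DERIV_mult d)
  moreover have "dv + \<beta> / 2 * (dv * h x + dv * h x) = \<gamma> * h 0 * exp (- Pint \<beta> h x)"
  proof -
    have "dv + \<beta> / 2 * (dv * h x + dv * h x) = dv * (1 + \<beta> * h x)" by (simp add: algebra_simps)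
    also have "\<dots> = \<gamma> * h 0 * exp (- Pint \<beta> h x)" unfolding dv_def using nz by simp
    finally show ?thesis .
  qed
  ultimately show ?thesis unfolding Uf_def power2_eq_square by simp
qed



lemma Pint0: "Pint \<beta> h 0 = 0" unfolding Pint_def by simp

lemma Pint_le:
  assumes gy: "good \<beta> \<gamma> L y" and gz: "good \<beta> \<gamma> L z" and b: "0 \<le> \<beta>" and x: "x \<in> {0..L}"
    and le: "\<And>s. s \<in> {0..x} \<Longrightarrow> z s \<le> y s"
  shows "Pint \<beta> y x \<le> Pint \<beta> z x"
  unfolding Pint_def
proof (rule integral_le)
  show "(\<lambda>s. 2 * s / (1 + \<beta> * y s)) integrable_on {0..x}"
    by (rule integrable_continuous_interval[OF q_cont[OF gy b]]) (use x in auto)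
  show "(\<lambda>s. 2 * s / (1 + \<beta> * z s)) integrable_on {0..x}"
    by (rule integrable_continuous_interval[OF q_cont[OF gz b]]) (use x in auto)
  fix s assume s: "s \<in> {0..x}"
  have zs: "0 \<le> z s" using good_bnd[OF gz, of s] s x by auto
  have "\<beta> * z s \<le> \<beta> * y s" using le[OF s] b by (simp add: mult_left_mono)
  moreover have "0 \<le> \<beta> * z s" using zs b by simp
  ultimately show "2 * s / (1 + \<beta> * y s) \<le> 2 * s / (1 + \<beta> * z s)"
    using s by (intro divide_left_mono) (auto intro!: mult_pos_pos)
qed

lemma Dderiv:
  assumes gy: "good \<beta> \<gamma> L y" and gz: "good \<beta> \<gamma> L z" and b: "0 \<le> \<beta>" and x: "x \<in> {0..L}"
  shows "((\<lambda>t. Uf \<beta> (y t) - Uf \<beta> (z t)) has_real_derivative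
     \<gamma> * y 0 * exp (- Pint \<beta> y x) - \<gamma> * z 0 * exp (- Pint \<beta> z x)) (at x within {0..L})"
  by (rule DERIV_diff[OF dU[OF gy b x] dU[OF gz b x]])

lemma Dcont:
  assumes gy: "good \<beta> \<gamma> L y" and gz: "good \<beta> \<gamma> L z" and b: "0 \<le> \<beta>"
  shows "continuous_on {0..L} (\<lambda>t. Uf \<beta> (y t) - Uf \<beta> (z t))"
  by (rule DERIV_continuous_on[OF Dderiv[OF gy gz b]])

lemma Dmono:
  assumes gy: "good \<beta> \<gamma> L y" and gz: "good \<beta> \<gamma> L z" and b: "0 \<le> \<beta>" "0 < \<gamma>"
    and ab: "z 0 \<le> y 0" and rt: "0 \<le> r" "r \<le> t" "t \<le> L"
    and le: "\<And>s. 0 \<le> s \<Longrightarrow> s < t \<Longrightarrow> z s \<le> y s"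
  shows "Uf \<beta> (y r) - Uf \<beta> (z r) \<le> Uf \<beta> (y t) - Uf \<beta> (z t)"
proof -
  define f where "f t = Uf \<beta> (y t) - Uf \<beta> (z t)" for t
  have c: "continuous_on {r..t} f" unfolding f_def
    by (rule continuous_on_subset[OF Dcont[OF gy gz b(1)]]) (use rt in auto)
  have d: "(f has_real_derivative \<gamma> * y 0 * exp (- Pint \<beta> y x) - \<gamma> * z 0 * exp (- Pint \<beta> z x)) (at x)"
    if "r < x" "x < t" for x
    using Dderiv[OF gy gz b(1), of x] that rt deriv_at_int[of f _ x 0 L] unfolding f_def by auto
  have "0 * (t - r) \<le> f t - f r"
  proof (rule mvt_lower[OF rt(2) c d])
    fix x assume x: "r < x" "x < t"
    have "Pint \<beta> y x \<le> Pint \<beta> z x"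
      by (rule Pint_le[OF gy gz b(1)]) (use x rt le in auto)
    then have e: "exp (- Pint \<beta> z x) \<le> exp (- Pint \<beta> y x)" by simp
    have z0: "0 \<le> z 0" using good_bnd[OF gz, of 0] rt by auto
    have "\<gamma> * z 0 * exp (- Pint \<beta> z x) \<le> \<gamma> * y 0 * exp (- Pint \<beta> y x)"
      by (intro mult_mono e) (use b ab z0 in auto)
    then show "0 \<le> \<gamma> * y 0 * exp (- Pint \<beta> y x) - \<gamma> * z 0 * exp (- Pint \<beta> z x)" by simp
  qed auto
  then show ?thesis unfolding f_def by simp
qed

lemma comp_strict:
  assumes gy: "good \<beta> \<gamma> L y" and gz: "good \<beta> \<gamma> L z" and b: "0 \<le> \<beta>" "0 < \<gamma>"
    and lt: "z 0 < y 0" and x: "x \<in> {0..L}"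
  shows "z x < y x"
proof (rule ccontr)
  assume "\<not> z x < y x"
  then have xS0: "y x \<le> z x" by simp
  define S where "S = {0..L} \<inter> (\<lambda>t. y t - z t) -` {..0}"
  have cyz: "continuous_on {0..L} (\<lambda>t. y t - z t)"
    using good_cont[OF gy] good_cont[OF gz] by (intro continuous_intros)
  have cl: "closed S" unfolding S_def by (rule continuous_closed_preimage[OF cyz]) auto
  have xS: "x \<in> S" unfolding S_def using x xS0 by auto
  have bb: "bdd_below S" unfolding S_def by (rule bdd_belowI[of _ 0]) auto
  define t0 where "t0 = Inf S"
  have t0S: "t0 \<in> S" unfolding t0_def by (rule closed_contains_Inf) (use xS bb cl in auto)
  then have t0: "t0 \<in> {0..L}" "y t0 \<le> z t0" unfolding S_def by auto
  have below: "z s < y s" if "0 \<le> s" "s < t0" for s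
  proof (rule ccontr)
    assume "\<not> z s < y s"
    then have "s \<in> S" unfolding S_def using that t0 by auto
    then have "t0 \<le> s" unfolding t0_def by (rule cInf_lower[OF _ bb])
    then show False using that by simp
  qed
  have "Uf \<beta> (y 0) - Uf \<beta> (z 0) \<le> Uf \<beta> (y t0) - Uf \<beta> (z t0)"
    by (rule Dmono[OF gy gz b]) (use lt t0 below in \<open>auto intro: less_imp_le\<close>)
  moreover have "0 < Uf \<beta> (y 0) - Uf \<beta> (z 0)"
    by (rule Uf_facts(3)) (use b lt good_bnd[OF gz, of 0] good_bnd[OF gy, of 0] t0 in auto)
  moreover have "Uf \<beta> (y t0) - Uf \<beta> (z t0) \<le> 0"
  proof -
    have "z t0 - y t0 \<le> Uf \<beta> (z t0) - Uf \<beta> (y t0)"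
      by (rule Uf_facts(2)) (use b t0 good_bnd[OF gz t0(1)] good_bnd[OF gy t0(1)] in auto)
    then show ?thesis using t0 by linarith
  qed
  ultimately show False by linarith
qed



lemma comp_eq:
  assumes gy: "good \<beta> \<gamma> L y" and gz: "good \<beta> \<gamma> L z" and b: "0 \<le> \<beta>" "0 < \<gamma>"
    and eq: "y 0 = z 0" and x: "x \<in> {0..L}"
  shows "y x = z x"
proof -
  define D where "D t = Uf \<beta> (y t) - Uf \<beta> (z t)" for t
  define R where "R t = Pint \<beta> y t - Pint \<beta> z t" for t
  define Dp where "Dp t = \<gamma> * y 0 * exp (- Pint \<beta> y t) - \<gamma> * z 0 * exp (- Pint \<beta> z t)" for t
  define Rp where "Rp t = 2 * t / (1 + \<beta> * y t) - 2 * t / (1 + \<beta> * z t)" for t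
  define K where "K = \<gamma> + 2 * L * \<beta>"
  define W where "W t = (D t * D t + R t * R t) * exp (- K * t)" for t
  define Wd where "Wd t = (Dp t * D t + Dp t * D t + (Rp t * R t + Rp t * R t)) * exp (- K * t)
     + (exp (- K * t) * (- K * 1)) * (D t * D t + R t * R t)" for t
  have dD: "(D has_real_derivative Dp t) (at t within {0..L})" if "t \<in> {0..L}" for t
    unfolding D_def Dp_def by (rule Dderiv[OF gy gz b(1) that])
  have dR: "(R has_real_derivative Rp t) (at t within {0..L})" if t: "t \<in> {0..L}" for t
  proof -
    have "((\<lambda>x. Pint \<beta> y x) has_real_derivative 2 * t / (1 + \<beta> * y t)) (at t within {0..L})"
      by (rule P_deriv(2)[OF good_cont[OF gy] b(1) _ t]) (use good_bnd[OF gy] in auto)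
    moreover have "((\<lambda>x. Pint \<beta> z x) has_real_derivative 2 * t / (1 + \<beta> * z t)) (at t within {0..L})"
      by (rule P_deriv(2)[OF good_cont[OF gz] b(1) _ t]) (use good_bnd[OF gz] in auto)
    ultimately show ?thesis unfolding R_def Rp_def by (rule DERIV_diff)
  qed
  have dW: "(W has_real_derivative Wd t) (at t within {0..L})" if t: "t \<in> {0..L}" for t
  proof -
    have e: "((\<lambda>t. exp (- K * t)) has_real_derivative exp (- K * t) * (- K * 1)) (at t within {0..L})"
      by (rule DERIV_chain2[OF DERIV_exp DERIV_cmult[OF DERIV_ident]])
    have s: "((\<lambda>t. D t * D t + R t * R t) has_real_derivative Dp t * D t + Dp t * D t + (Rp t * R t + Rp t * R t)) (at t within {0..L})"
      by (intro DERIV_add DERIV_mult dD dR t)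
    show ?thesis unfolding W_def Wd_def by (rule DERIV_mult[OF s e])
  qed
  have cW: "continuous_on {0..L} W" by (rule DERIV_continuous_on[OF dW])
  have Wneg: "Wd t \<le> 0" if t: "0 < t" "t < L" for t
  proof -
    have tL: "t \<in> {0..L}" using t by auto
    have y0: "0 \<le> y 0" "y 0 \<le> 1" using good_bnd[OF gy, of 0] t by auto
    have yt: "0 \<le> y t" using good_bnd[OF gy tL] by auto
    have zt: "0 \<le> z t" using good_bnd[OF gz tL] by auto
    have Py: "0 \<le> Pint \<beta> y t" using P_bounds[OF gy b(1) tL] by auto
    have Pz: "0 \<le> Pint \<beta> z t" using P_bounds[OF gz b(1) tL] by auto
    have a1: "\<bar>Dp t\<bar> \<le> \<gamma> * \<bar>R t\<bar>"
    proof -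
      have "Dp t = (\<gamma> * y 0) * (exp (- Pint \<beta> y t) - exp (- Pint \<beta> z t))"
        unfolding Dp_def using eq by (simp add: algebra_simps)
      then have "\<bar>Dp t\<bar> = (\<gamma> * y 0) * \<bar>exp (- Pint \<beta> y t) - exp (- Pint \<beta> z t)\<bar>"
        using y0 b by (simp add: abs_mult)
      also have "\<dots> \<le> (\<gamma> * y 0) * \<bar>R t\<bar>" unfolding R_def
        by (rule mult_left_mono[OF exp_lip[OF Py Pz]]) (use y0 b in simp)
      also have "\<dots> \<le> \<gamma> * \<bar>R t\<bar>"
      proof -
        have "y 0 * \<bar>R t\<bar> \<le> 1 * \<bar>R t\<bar>" by (rule mult_right_mono) (use y0 in auto)
        then have "\<gamma> * (y 0 * \<bar>R t\<bar>) \<le> \<gamma> * \<bar>R t\<bar>" using b by (simp add: mult_left_mono)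
        then show ?thesis by (simp add: mult.assoc)
      qed
      finally show ?thesis .
    qed
    have a2: "\<bar>Rp t\<bar> \<le> (2 * L * \<beta>) * \<bar>D t\<bar>"
    proof -
      have "\<bar>Rp t\<bar> \<le> 2 * t * \<beta> * \<bar>y t - z t\<bar>" unfolding Rp_def
        by (rule q_diff) (use t yt zt b in auto)
      also have "\<dots> \<le> 2 * L * \<beta> * \<bar>D t\<bar>"
      proof (rule mult_mono)
        show "2 * t * \<beta> \<le> 2 * L * \<beta>" using t b by (simp add: mult_right_mono)
        show "\<bar>y t - z t\<bar> \<le> \<bar>D t\<bar>" unfolding D_def using Uf_facts(1)[OF b(1) zt yt] .
      qed (use b t in auto)
      finally show ?thesis .
    qed
    have "2 * D t * Dp t + 2 * R t * Rp t \<le> (\<gamma> + 2 * L * \<beta>) * (D t ^ 2 + R t ^ 2)"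
      by (rule energy_ineq[OF a1 a2]) (use b t in auto)
    then have "Dp t * D t + Dp t * D t + (Rp t * R t + Rp t * R t) - K * (D t * D t + R t * R t) \<le> 0"
      unfolding K_def power2_eq_square by (simp add: algebra_simps)
    then have "(Dp t * D t + Dp t * D t + (Rp t * R t + Rp t * R t) - K * (D t * D t + R t * R t)) * exp (- K * t) \<le> 0"
      by (simp add: mult_nonpos_nonneg)
    then show ?thesis unfolding Wd_def by (simp add: algebra_simps)
  qed
  have x0: "0 \<le> x" "x \<le> L" using x by auto
  have "W x - W 0 \<le> 0 * (x - 0)"
  proof (rule mvt_upper[OF x0(1) _ _ ])
    show "continuous_on {0..x} W" by (rule continuous_on_subset[OF cW]) (use x0 in auto)
    fix t assume t: "0 < t" "t < x"
    show "(W has_real_derivative Wd t) (at t)" using dW[of t] t x0 deriv_at_int[of W _ t 0 L] by auto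
    show "Wd t \<le> 0" using Wneg t x0 by auto
  qed
  moreover have "W 0 = 0" unfolding W_def D_def R_def using eq by (simp add: Pint0)
  ultimately have "W x \<le> 0" by simp
  then have "D x * D x + R x * R x \<le> 0" unfolding W_def by (simp add: mult_le_0_iff)
  moreover have "0 \<le> D x * D x" "0 \<le> R x * R x" by simp_all
  ultimately have "D x * D x = 0" by linarith
  then have "D x = 0" by simp
  moreover have "\<bar>y x - z x\<bar> \<le> \<bar>D x\<bar>" unfolding D_def
    by (rule Uf_facts(1)) (use b good_bnd[OF gy x] good_bnd[OF gz x] in auto)
  ultimately show ?thesis by simp
qed



lemma cmp_pair:
  assumes gy: "good \<beta> \<gamma> lam y" and gz: "good \<beta> \<gamma> mu z" and b: "0 \<le> \<beta>" "0 < \<gamma>"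
    and lm: "0 < lam" "lam \<le> mu" and yl: "y lam = 1" and zm: "z mu = 1"
  shows "z 0 \<le> y 0 \<and> (\<forall>\<eta>\<in>{0..lam}. 0 \<le> y \<eta> - z \<eta> \<and> y \<eta> - z \<eta> \<le> (1+\<beta>)*\<gamma>*(mu - lam))"
proof -
  have gz': "good \<beta> \<gamma> lam z" by (rule good_restrict[OF gz lm(2)])
  have lamI: "lam \<in> {0..lam}" using lm by auto
  have zl: "z lam \<le> 1" "0 \<le> z lam" using good_bnd[OF gz, of lam] lm by auto
  have zy: "z 0 \<le> y 0"
  proof (rule ccontr)
    assume "\<not> z 0 \<le> y 0"
    then have "y 0 < z 0" by simp
    then have "y lam < z lam" by (rule comp_strict[OF gz' gy b _ lamI])
    then show False using yl zl by simp
  qed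
  have mub: "z lam \<le> z mu \<and> z mu - z lam \<le> \<gamma> * z 0 * (mu - lam)"
    by (rule good_mono[OF gz b]) (use lm in auto)
  have z0: "0 \<le> z 0" "z 0 \<le> 1" using good_bnd[OF gz, of 0] lm by auto
  have "\<gamma> * z 0 * (mu - lam) \<le> \<gamma> * 1 * (mu - lam)"
    using z0 b lm by (intro mult_right_mono mult_left_mono) auto
  then have zdiff: "1 - z lam \<le> \<gamma> * (mu - lam)" using mub zm by simp
  have CC: "0 \<le> (1+\<beta>)*\<gamma>*(mu - lam)" using b lm by simp
  show ?thesis
  proof (cases "y 0 = z 0")
    case True
    then have "y \<eta> = z \<eta>" if "\<eta> \<in> {0..lam}" for \<eta> by (rule comp_eq[OF gy gz' b _ that])
    then show ?thesis using zy CC by auto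
  next
    case False
    then have lt: "z 0 < y 0" using zy by simp
    have strict: "z \<eta> < y \<eta>" if "\<eta> \<in> {0..lam}" for \<eta> by (rule comp_strict[OF gy gz' b lt that])
    have "y \<eta> - z \<eta> \<le> (1+\<beta>)*\<gamma>*(mu - lam)" if e: "\<eta> \<in> {0..lam}" for \<eta>
    proof -
      have "y \<eta> - z \<eta> \<le> Uf \<beta> (y \<eta>) - Uf \<beta> (z \<eta>)"
        by (rule Uf_facts(2)) (use b good_bnd[OF gz' e] good_bnd[OF gy e] strict[OF e] in auto)
      also have "\<dots> \<le> Uf \<beta> (y lam) - Uf \<beta> (z lam)"
        by (rule Dmono[OF gy gz' b zy]) (use e strict in \<open>auto intro: less_imp_le\<close>)
      also have "\<dots> \<le> (1 + \<beta>) * (1 - z lam)" unfolding yl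
        by (rule Uf_facts(4)) (use b zl in auto)
      also have "\<dots> \<le> (1 + \<beta>) * (\<gamma> * (mu - lam))" by (rule mult_left_mono[OF zdiff]) (use b in simp)
      finally show ?thesis by (simp add: mult.assoc)
    qed
    then show ?thesis using zy strict by (auto intro: less_imp_le)
  qed
qed

lemma lip_sym:
  fixes f :: "real \<Rightarrow> real"
  assumes "\<And>x y. x \<in> S \<Longrightarrow> y \<in> S \<Longrightarrow> x \<le> y \<Longrightarrow> \<bar>f x - f y\<bar> \<le> K * (y - x)" "0 \<le> K"
  shows "continuous_on S f"
proof (rule lipschitz_on_continuous_on)
  show "K-lipschitz_on S f"
  proof (rule lipschitz_onI)
    fix x y assume xy: "x \<in> S" "y \<in> S"
    show "dist (f x) (f y) \<le> K * dist x y"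
    proof (cases "x \<le> y")
      case True then show ?thesis using assms(1)[OF xy True] by (simp add: dist_real_def)
    next
      case False then show ?thesis using assms(1)[OF xy(2,1)] by (simp add: dist_real_def abs_minus_commute)
    qed
  qed (rule assms(2))
qed

lemma J_lip:
  assumes gy: "good \<beta> \<gamma> x y" and gz: "good \<beta> \<gamma> t z" and b: "0 \<le> \<beta>"
    and xt: "0 < x" "x \<le> t" and M: "\<And>\<eta>. \<eta> \<in> {0..x} \<Longrightarrow> \<bar>y \<eta> - z \<eta>\<bar> \<le> M"
  shows "\<bar>Pint \<beta> y x - Pint \<beta> z t\<bar> \<le> 2 * x * \<beta> * M * x + 2 * t * (t - x)"
proof -
  define qy where "qy s = 2 * s / (1 + \<beta> * y s)" for s
  define qz where "qz s = 2 * s / (1 + \<beta> * z s)" for s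
  have cy: "continuous_on {0..x} qy" unfolding qy_def by (rule q_cont[OF gy b]) simp
  have czt: "continuous_on {0..t} qz" unfolding qz_def by (rule q_cont[OF gz b]) simp
  have czx: "continuous_on {0..x} qz" by (rule continuous_on_subset[OF czt]) (use xt in auto)
  have czxt: "continuous_on {x..t} qz" by (rule continuous_on_subset[OF czt]) (use xt in auto)
  have split: "Pint \<beta> z t = integral {0..x} qz + integral {x..t} qz"
    unfolding Pint_def qz_def[symmetric]
    using Henstock_Kurzweil_Integration.integral_combine[where a=0 and c=x and b=t and f=qz] xt integrable_continuous_interval[OF czt] by simp
  have diff: "Pint \<beta> y x - integral {0..x} qz = integral {0..x} (\<lambda>s. qy s - qz s)"
    unfolding Pint_def qy_def[symmetric]
    by (rule integral_diff[symmetric]) (use integrable_continuous_interval[OF cy] integrable_continuous_interval[OF czx] in auto)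
  have M0: "0 \<le> M" using M[of 0] xt by (smt (verit) atLeastAtMost_iff)
  have i1: "norm (integral {0..x} (\<lambda>s. qy s - qz s)) \<le> (2 * x * \<beta> * M) * (x - 0)"
  proof (rule integral_bound)
    show "continuous_on {0..x} (\<lambda>s. qy s - qz s)" using cy czx by (intro continuous_intros)
    fix s assume s: "s \<in> {0..x}"
    have st: "s \<in> {0..t}" using s xt by auto
    have "\<bar>qy s - qz s\<bar> \<le> 2 * s * \<beta> * \<bar>y s - z s\<bar>" unfolding qy_def qz_def
      by (rule q_diff) (use s b good_bnd[OF gy s] good_bnd[OF gz st] in auto)
    also have "\<dots> \<le> 2 * x * \<beta> * M"
      by (rule mult_mono) (use s b M[OF s] M0 in \<open>auto intro: mult_right_mono\<close>)
    finally show "norm (qy s - qz s) \<le> 2 * x * \<beta> * M" by simp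
  qed (use xt in auto)
  have i2: "norm (integral {x..t} qz) \<le> (2 * t) * (t - x)"
  proof (rule integral_bound)
    fix s assume s: "s \<in> {x..t}"
    have st: "s \<in> {0..t}" using s xt by auto
    have "0 \<le> qz s \<and> qz s \<le> 2 * s" unfolding qz_def by (rule q_bnd) (use b s xt good_bnd[OF gz st] in auto)
    then show "norm (qz s) \<le> 2 * t" using s by auto
  qed (use xt czxt in auto)
  have "Pint \<beta> y x - Pint \<beta> z t = integral {0..x} (\<lambda>s. qy s - qz s) - integral {x..t} qz"
    using split diff by simp
  then show ?thesis using i1 i2 by (simp add: abs_diff_le_iff) (smt (verit) abs_le_D1 abs_le_D2 abs_minus_commute)
qed



theorem theorem3p12:
  fixes \<gamma> \<beta> Ste :: real and \<phi> :: "real \<Rightarrow> real \<Rightarrow> real"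
  assumes "\<gamma> > 0"
    and "0 \<le> \<beta>" and "\<beta> < beta1 \<gamma>"
    and "Ste > 0"
    and "\<And>lam. lam > 0 \<Longrightarrow> solves_problem \<beta> \<gamma> lam (\<phi> lam)"
    and "\<And>lam h. lam > 0 \<Longrightarrow> solves_problem \<beta> \<gamma> lam h \<Longrightarrow> \<forall>\<eta>\<in>{0..lam}. h \<eta> = \<phi> lam \<eta>"
  shows "\<exists>lam>0. \<exists>d. (\<phi> lam has_real_derivative d) (at lam within {0..lam}) \<and>
                d / lam = 2 / ((1 + \<beta>) * Ste)"
proof -
  have b: "0 \<le> \<beta>" "0 < \<gamma>" using assms(1,2) by auto
  define c where "c = 2 / ((1 + \<beta>) * Ste)"
  have c0: "0 < c" unfolding c_def using assms(2,4) by simp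
  have gd: "good \<beta> \<gamma> lam (\<phi> lam)" if "lam > 0" for lam
    by (rule key[OF b(1) that assms(5)[OF that]])
  have one: "\<phi> lam lam = 1" if "lam > 0" for lam
    using conjunct2[OF conjunct2[OF conjunct2[OF assms(5)[OF that, unfolded solves_problem_def]]]] .
  define A where "A lam = \<phi> lam 0" for lam
  define J where "J lam = Pint \<beta> (\<phi> lam) lam" for lam
  define Gf where "Gf lam = \<gamma> * A lam * exp (- J lam)" for lam
  define F where "F lam = Gf lam / ((1 + \<beta>) * lam)" for lam
  define C where "C = (1 + \<beta>) * \<gamma>"
  have C0: "0 \<le> C" unfolding C_def using b by simp
  have der: "(\<phi> lam has_real_derivative Gf lam / (1 + \<beta>)) (at lam within {0..lam})" if l: "lam > 0" for lam
    using good_der[OF gd[OF l], of lam] l one[OF l] unfolding Gf_def A_def J_def by simp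
  have pair: "A y \<le> A x \<and> (\<forall>\<eta>\<in>{0..x}. 0 \<le> \<phi> x \<eta> - \<phi> y \<eta> \<and> \<phi> x \<eta> - \<phi> y \<eta> \<le> C * (y - x))"
    if xy: "0 < x" "x \<le> y" for x y
    using cmp_pair[OF gd[OF xy(1)] gd[of y] b xy one[OF xy(1)] one[of y]] xy unfolding A_def C_def by auto
  have Abnd: "0 \<le> A lam \<and> A lam \<le> 1" if "lam > 0" for lam
    using good_bnd[OF gd[OF that], of 0] that unfolding A_def by auto
  have Jbnd: "0 \<le> J lam \<and> J lam \<le> 2 * lam * lam" if "lam > 0" for lam
    using P_bounds[OF gd[OF that] b(1), of lam] that unfolding J_def by auto
  have Fcont: "continuous_on {l1..l2} F" if l: "0 < l1" "l1 \<le> l2" for l1 l2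
  proof -
    have cA: "continuous_on {l1..l2} A"
    proof (rule lip_sym[OF _ C0])
      fix x y assume xy: "x \<in> {l1..l2}" "y \<in> {l1..l2}" "x \<le> y"
      then have "0 < x" using l by auto
      then show "\<bar>A x - A y\<bar> \<le> C * (y - x)" using pair[OF _ xy(3)] xy
        by (auto simp: A_def)
    qed
    define KJ where "KJ = 2 * l2 * \<beta> * C * l2 + 2 * l2"
    have "0 \<le> 2 * l2 * \<beta> * C * l2" using b C0 l by (intro mult_nonneg_nonneg) auto
    then have KJ0: "0 \<le> KJ" unfolding KJ_def using l by linarith
    have cJ: "continuous_on {l1..l2} J"
    proof (rule lip_sym[OF _ KJ0])
      fix x y assume xy: "x \<in> {l1..l2}" "y \<in> {l1..l2}" "x \<le> y"
      then have x0: "0 < x" using l by auto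
      have "\<bar>J x - J y\<bar> \<le> 2 * x * \<beta> * (C * (y - x)) * x + 2 * y * (y - x)" unfolding J_def
        by (rule J_lip[OF gd[OF x0] gd[of y] b(1) x0 xy(3)]) (use pair[OF x0 xy(3)] x0 xy in auto)
      also have "\<dots> = (y - x) * (2 * \<beta> * C * (x * x) + 2 * y)" by (simp add: algebra_simps)
      also have "\<dots> \<le> (y - x) * KJ"
      proof (rule mult_left_mono)
        have "x * x \<le> l2 * l2" using xy x0 by (intro mult_mono) auto
        then have "2 * \<beta> * C * (x * x) \<le> 2 * \<beta> * C * (l2 * l2)" using b C0 by (intro mult_left_mono) auto
        moreover have "y \<le> l2" using xy by auto
        ultimately show "2 * \<beta> * C * (x * x) + 2 * y \<le> KJ" unfolding KJ_def by (simp add: algebra_simps)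
      qed (use xy in auto)
      finally show "\<bar>J x - J y\<bar> \<le> KJ * (y - x)" by (simp add: mult.commute)
    qed
    show ?thesis unfolding F_def Gf_def
      using cA cJ l b by (intro continuous_intros) auto
  qed
  have Fup: "F lam \<le> (\<gamma> / (1 + \<beta>)) / lam" if l: "lam > 0" for lam
  proof -
    have e: "exp (- J lam) \<le> 1" using Jbnd[OF l] by simp
    have "\<gamma> * A lam * exp (- J lam) \<le> \<gamma> * 1 * 1"
      using Abnd[OF l] b e by (intro mult_mono) auto
    then have "Gf lam \<le> \<gamma>" unfolding Gf_def by simp
    then have "Gf lam / ((1 + \<beta>) * lam) \<le> \<gamma> / ((1 + \<beta>) * lam)"
      using b l by (intro divide_right_mono) auto
    then show ?thesis unfolding F_def by simp
  qed
  define B where "B = \<gamma> * exp (- 2) / ((1 + \<gamma>) * (1 + \<beta>))"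
  have B0: "0 < B" unfolding B_def using b by simp
  have Flow: "B / lam \<le> F lam" if l: "0 < lam" "lam \<le> 1" for lam
  proof -
    have a: "0 \<le> A lam" using Abnd l by auto
    have "\<phi> lam 0 \<le> \<phi> lam lam \<and> \<phi> lam lam - \<phi> lam 0 \<le> \<gamma> * \<phi> lam 0 * (lam - 0)"
      by (rule good_mono[OF gd[OF l(1)] b]) (use l in auto)
    then have "1 - A lam \<le> \<gamma> * A lam * lam" unfolding A_def using one[OF l(1)] by simp
    also have "\<dots> \<le> \<gamma> * A lam * 1" using a b l by (intro mult_left_mono) auto
    finally have a1: "1 / (1 + \<gamma>) \<le> A lam" using b by (simp add: divide_le_eq algebra_simps)
    have "exp (- 2) \<le> exp (- J lam)"
    proof -
      have "lam * lam \<le> 1 * 1" using l by (intro mult_mono) auto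
      then show ?thesis using Jbnd[OF l(1)] by simp
    qed
    then have "\<gamma> * (1 / (1 + \<gamma>)) * exp (- 2) \<le> \<gamma> * A lam * exp (- J lam)"
      using a1 a b by (intro mult_mono) auto
    then have g: "\<gamma> * exp (- 2) / (1 + \<gamma>) \<le> Gf lam" unfolding Gf_def by simp
    have "B / lam = (\<gamma> * exp (- 2) / (1 + \<gamma>)) / ((1 + \<beta>) * lam)" unfolding B_def by simp
    also have "\<dots> \<le> Gf lam / ((1 + \<beta>) * lam)" using g b l by (intro divide_right_mono) auto
    finally show ?thesis unfolding F_def .
  qed
  define l1 where "l1 = min 1 (B / c)"
  have l10: "0 < l1" "l1 \<le> 1" "l1 \<le> B / c" unfolding l1_def using B0 c0 by auto
  have F1: "c \<le> F l1"
  proof -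
    have "c * l1 \<le> B" using l10(3) c0 by (simp add: le_divide_eq mult.commute)
    then have "c \<le> B / l1" using l10(1) by (simp add: le_divide_eq)
    then show ?thesis using Flow[OF l10(1,2)] by linarith
  qed
  define E2 where "E2 = \<gamma> / (1 + \<beta>)"
  define l2 where "l2 = l1 + E2 / c + 1"
  have E20: "0 \<le> E2" unfolding E2_def using b by simp
  have "0 \<le> E2 / c" using E20 c0 by simp
  then have l2: "l1 \<le> l2" "0 < l2" "E2 / c \<le> l2" unfolding l2_def using l10 by auto
  have F2: "F l2 \<le> c"
  proof -
    have "E2 \<le> c * l2" using l2(3) c0 by (simp add: divide_le_eq mult.commute)
    then have "E2 / l2 \<le> c" using l2(2) by (simp add: divide_le_eq mult.commute)
    then show ?thesis using Fup[OF l2(2)] unfolding E2_def by linarith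
  qed
  obtain x where x: "l1 \<le> x" "x \<le> l2" "F x = c"
    using IVT2'[of F l2 c l1, OF F2 F1 l2(1) Fcont[OF l10(1) l2(1)]] by blast
  have x0: "0 < x" using x l10 by auto
  show ?thesis
  proof (intro exI conjI)
    show "0 < x" by (rule x0)
    show "(\<phi> x has_real_derivative Gf x / (1 + \<beta>)) (at x within {0..x})" by (rule der[OF x0])
    show "Gf x / (1 + \<beta>) / x = 2 / ((1 + \<beta>) * Ste)" using x(3) unfolding F_def c_def by simp
  qed
qed

end
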